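(* Let $p\in[1,\infty]$ and $q$ its dual exponent ($1/p+1/q=1$). Let $\boldsymbol{\mu}_+,\boldsymbol{\mu}_-\in\mathbb{R}^d$, $\sigma>0$, and let $(\boldsymbol{X},Y)$ be random with $P(Y=+)=P(Y=-)=1/2$ and $\boldsymbol{X}\mid Y=i\sim N(\boldsymbol{\mu}_i,\sigma^2\boldsymbol{I}_d)$. Let $\boldsymbol{w}\in\mathbb{R}^d\setminus\{\boldsymbol{0}\}$, $b\in\mathbb{R}$, and let the linear classifier assign $\boldsymbol{x}$ to class $+$ iff $\boldsymbol{w}\cdot\boldsymbol{x}+b>0$. Let $\varepsilon>0$, $\boldsymbol{\mu}=\frac12(\boldsymbol{\mu}_+-\boldsymbol{\mu}_-)$, $\bar{\boldsymbol{\mu}}=\frac12(\boldsymbol{\mu}_++\boldsymbol{\mu}_-)$, $b'=\boldsymbol{w}\cdot\bar{\boldsymbol{\mu}}+b$. Let $p_m$ be the probability that $\boldsymbol{X}$ is misclassified and $p_{adv|p}$ the probability that $\boldsymbol{X}$ is correctly classified and there is $\boldsymbol{x}'$ with $\|\boldsymbol{X}-\boldsymbol{x}'\|_p\le\varepsilon$ that is assigned a different class than $\boldsymbol{X}$. Then $$p_{adv|p}=1-p_m-\frac12\left[\Phi\!\left(\frac{\boldsymbol{w}\cdot\boldsymbol{\mu}+b'}{\|\boldsymbol{w}\|_2\sigma}-\frac{\|\boldsymbol{w}\|_q}{\|\boldsymbol{w}\|_2}\frac{\varepsilon}{\sigma}\right)+\Phi\!\left(\frac{\boldsymbol{w}\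cdot\boldsymbol{\mu}-b'}{\|\boldsymbol{w}\|_2\sigma}-\frac{\|\boldsymbol{w}\|_q}{\|\boldsymbol{w}\|_2}\frac{\varepsilon}{\sigma}\right)\right].$$
   Context: $\Phi$ denotes the standard normal CDF. *)

theory Defs
  imports "HOL-Analysis.Analysis" "HOL-Probability.Probability"
begin

definition Phi :: "real \<Rightarrow> real" where
  "Phi x = (LBINT t:{..x}. std_normal_density t)"

definition pnorm :: "ereal \<Rightarrow> real ^ 'd \<Rightarrow> real" where
  "pnorm p x = (if p = \<infinity> then Max (range (\<lambda>i. \<bar>x $ i\<bar>))
     else (\<Sum>i\<in>UNIV. \<bar>x $ i\<bar> powr real_of_ereal p) powr (1 / real_of_ereal p))"

definition gauss_iso :: "real ^ 'd \<Rightarrow> real \<Rightarrow> (real ^ 'd) measure" where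
  "gauss_iso m s = density lborel (\<lambda>x. ennreal (\<Prod>i\<in>UNIV. normal_density (m $ i) s (x $ i)))"

text \<open>Linear classifier: True (class +) iff w.x + b > 0.\<close>
definition lin_class :: "real ^ 'd \<Rightarrow> real \<Rightarrow> real ^ 'd \<Rightarrow> bool" where
  "lin_class w b x \<longleftrightarrow> w \<bullet> x + b > 0"

end

theory Submission
  imports Defs
begin
lemma ereal_cases_dual:
  fixes p q :: ereal
  assumes "1 \<le> p" "1 \<le> q" "1 / p + 1 / q = 1"
  shows "(p = 1 \<and> q = \<infinity>) \<or> (p = \<infinity> \<and> q = 1) \<or>
         (\<exists>r s. p = ereal r \<and> q = ereal s \<and> 1 < r \<and> 1 < s \<and> 1/r + 1/s = 1)"
proof (cases p)
  case (real r)
  then have r: "1 \<le> r" using assms by auto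
  show ?thesis
  proof (cases q)
    case (real s)
    then have s: "1 \<le> s" using assms by auto
    have dr: "1 / ereal r = ereal (1/r)" using ereal_divide[of 1 r] r unfolding one_ereal_def by simp
    have ds: "1 / ereal s = ereal (1/s)" using ereal_divide[of 1 s] s unfolding one_ereal_def by simp
    have "ereal (1/r) + ereal (1/s) = 1" using assms \<open>p = ereal r\<close> real dr ds by simp
    then have e: "1/r + 1/s = 1" by (simp add: one_ereal_def)
    have "1 < r" proof (rule ccontr) assume "\<not> 1 < r" then have "r = 1" using r by simp
      with e s show False by simp qed
    moreover have "1 < s" proof (rule ccontr) assume "\<not> 1 < s" then have "s = 1" using s by simp
      with e r show False by simp qed
    ultimately show ?thesis using e real \<open>p = ereal r\<close> by blast
  next
    case PInf
    have dr: "1 / ereal r = ereal (1/r)" using ereal_divide[of 1 r] r unfolding one_ereal_def by simp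
    then have "ereal (1/r) = 1" using assms \<open>p = ereal r\<close> PInf by simp
    then have "r = 1" using r by (simp add: one_ereal_def)
    then show ?thesis using PInf \<open>p = ereal r\<close> by (simp add: one_ereal_def)
  next
    case MInf then show ?thesis using assms by simp
  qed
next
  case PInf
  then have "1 / q = 1" using assms by simp
  then have "q = 1" using assms(2)
    by (cases q) (auto simp: one_ereal_def split: if_splits)
  then show ?thesis using PInf by simp
next
  case MInf then show ?thesis using assms by simp
qed

lemma holder_sum:
  fixes a b :: "'i \<Rightarrow> real" and I :: "'i set"
  assumes fin: "finite I" and rs: "1 < r" "1 < s" "1/r + 1/s = 1"
  shows "(\<Sum>i\<in>I. \<bar>a i\<bar> * \<bar>b i\<bar>)
     \<le> (\<Sum>i\<in>I. \<bar>a i\<bar> powr r) powr (1/r) * (\<Sum>i\<in>I. \<bar>b i\<bar> powr s) powr (1/s)"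
proof -
  define A where "A = (\<Sum>i\<in>I. \<bar>a i\<bar> powr r)"
  define B where "B = (\<Sum>i\<in>I. \<bar>b i\<bar> powr s)"
  have A0: "A \<ge> 0" "B \<ge> 0" unfolding A_def B_def by (auto intro: sum_nonneg)
  show ?thesis
  proof (cases "A = 0 \<or> B = 0")
    case True
    then have "\<forall>i\<in>I. a i = 0 \<or> b i = 0"
      unfolding A_def B_def using fin by (auto simp: sum_nonneg_eq_0_iff)
    then have "(\<Sum>i\<in>I. \<bar>a i\<bar> * \<bar>b i\<bar>) = 0" by (intro sum.neutral) auto
    then show ?thesis by (simp add: A_def[symmetric] B_def[symmetric])
  next
    case False
    then have Ap: "A > 0" "B > 0" using A0 by auto
    define A' where "A' = A powr (1/r)"
    define B' where "B' = B powr (1/s)"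
    have A'p: "A' > 0" "B' > 0" using Ap unfolding A'_def B'_def by auto
    have Ar: "A' powr r = A" unfolding A'_def using Ap rs by (simp add: powr_powr)
    have Bs: "B' powr s = B" unfolding B'_def using Ap rs by (simp add: powr_powr)
    have each: "\<bar>a i\<bar> / A' * (\<bar>b i\<bar> / B') \<le> \<bar>a i\<bar> powr r / A / r + \<bar>b i\<bar> powr s / B / s" for i
    proof -
      have "\<bar>a i\<bar> / A' * (\<bar>b i\<bar> / B') \<le> (\<bar>a i\<bar> / A') powr r / r + (\<bar>b i\<bar> / B') powr s / s"
        using Youngs_inequality[of r s "\<bar>a i\<bar> / A'" "\<bar>b i\<bar> / B'"] rs A'p by simp
      also have "\<dots> = \<bar>a i\<bar> powr r / A / r + \<bar>b i\<bar> powr s / B / s"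
        using A'p by (simp add: powr_divide Ar Bs)
      finally show ?thesis .
    qed
    have "(\<Sum>i\<in>I. \<bar>a i\<bar> * \<bar>b i\<bar>) / (A' * B') = (\<Sum>i\<in>I. \<bar>a i\<bar> / A' * (\<bar>b i\<bar> / B'))"
      by (simp add: sum_divide_distrib)
    also have "\<dots> \<le> (\<Sum>i\<in>I. \<bar>a i\<bar> powr r / A / r + \<bar>b i\<bar> powr s / B / s)"
      by (intro sum_mono each)
    also have "\<dots> = A / A / r + B / B / s"
      by (simp add: sum.distrib sum_divide_distrib[symmetric] A_def B_def)
    also have "\<dots> = 1" using Ap rs by simp
    finally have "(\<Sum>i\<in>I. \<bar>a i\<bar> * \<bar>b i\<bar>) \<le> A' * B'"
      using A'p by (simp add: divide_le_eq)
    then show ?thesis unfolding A'_def B'_def A_def B_def .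
  qed
qed

lemma inner_vec_sum: "w \<bullet> v = (\<Sum>i\<in>UNIV. w $ i * v $ i)" for w v :: "real ^ 'd"
  by (simp add: inner_vec_def)

lemma abs_inner_le: "\<bar>w \<bullet> v\<bar> \<le> (\<Sum>i\<in>UNIV. \<bar>w $ i\<bar> * \<bar>v $ i\<bar>)" for w v :: "real ^ 'd"
  unfolding inner_vec_sum by (metis (no_types, lifting) abs_mult sum.cong sum_abs)

lemma pnorm_one: "pnorm 1 v = (\<Sum>i\<in>UNIV. \<bar>v $ i\<bar>)"
  by (simp add: pnorm_def sum_nonneg)

lemma pnorm_fin: "pnorm (ereal r) v = (\<Sum>i\<in>UNIV. \<bar>v $ i\<bar> powr r) powr (1/r)"
  by (simp add: pnorm_def)

lemma pnorm_inf: "pnorm \<infinity> v = Max (range (\<lambda>i. \<bar>v $ i\<bar>))"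
  by (simp add: pnorm_def)

lemma Max_abs_ge: "\<bar>v $ i\<bar> \<le> Max (range (\<lambda>i. \<bar>v $ i\<bar>))" for v :: "real ^ 'd"
  by (rule Max_ge) auto

lemma holder_fin:
  fixes w v :: "real ^ 'd"
  assumes rs: "1 < r" "1 < s" "1/r + 1/s = 1"
  shows "\<bar>w \<bullet> v\<bar> \<le> pnorm (ereal r) v * pnorm (ereal s) w"
proof -
  have "\<bar>w \<bullet> v\<bar> \<le> (\<Sum>i\<in>UNIV. \<bar>v $ i\<bar> * \<bar>w $ i\<bar>)"
    using abs_inner_le[of w v] by (simp add: mult.commute)
  also have "\<dots> \<le> pnorm (ereal r) v * pnorm (ereal s) w"
    unfolding pnorm_fin by (rule holder_sum[OF _ rs]) simp
  finally show ?thesis .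
qed

lemma attain_fin:
  fixes w :: "real ^ 'd"
  assumes rs: "1 < r" "1 < s" "1/r + 1/s = 1"
  shows "\<exists>v. pnorm (ereal r) v \<le> 1 \<and> pnorm (ereal s) w \<le> w \<bullet> v"
proof -
  define A where "A = (\<Sum>i\<in>UNIV. \<bar>w $ i\<bar> powr s)"
  have A0: "A \<ge> 0" unfolding A_def by (auto intro: sum_nonneg)
  show ?thesis
  proof (cases "A = 0")
    case True
    then show ?thesis using rs
      by (intro exI[of _ 0]) (simp add: pnorm_fin A_def[symmetric])
  next
    case False
    then have Ap: "A > 0" using A0 by simp
    define A' where "A' = A powr (1/s)"
    have A'p: "A' > 0" using Ap unfolding A'_def by simp
    have As: "A' powr s = A" unfolding A'_def using Ap rs by (simp add: powr_powr)
    have sr: "(s - 1) * r = s" using rs by (simp add: field_simps)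
    define v :: "real ^ 'd" where "v = (\<chi> i. sgn (w $ i) * \<bar>w $ i\<bar> powr (s - 1) / A' powr (s - 1))"
    have vi: "\<bar>v $ i\<bar> powr r = \<bar>w $ i\<bar> powr s / A" for i
    proof (cases "w $ i = 0")
      case True then show ?thesis using rs by (simp add: v_def)
    next
      case False
      have "\<bar>v $ i\<bar> = \<bar>w $ i\<bar> powr (s - 1) / A' powr (s - 1)"
        using False by (simp add: v_def abs_mult abs_sgn_eq)
      then have "\<bar>v $ i\<bar> powr r = (\<bar>w $ i\<bar> powr (s - 1)) powr r / (A' powr (s - 1)) powr r"
        by (simp add: powr_divide)
      also have "\<dots> = \<bar>w $ i\<bar> powr s / A' powr s" by (simp add: powr_powr sr)
      finally show ?thesis by (simp add: As)
    qed
    have "pnorm (ereal r) v = (\<Sum>i\<in>UNIV. \<bar>w $ i\<bar> powr s / A) powr (1/r)"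
      by (simp add: pnorm_fin vi)
    also have "\<dots> = 1" using Ap by (simp add: sum_divide_distrib[symmetric] A_def[symmetric])
    finally have n1: "pnorm (ereal r) v = 1" .
    have wi: "w $ i * v $ i = \<bar>w $ i\<bar> powr s / A' powr (s - 1)" for i
    proof (cases "w $ i = 0")
      case True then show ?thesis using rs by (simp add: v_def)
    next
      case False
      have "w $ i * sgn (w $ i) = \<bar>w $ i\<bar>" by (simp add: abs_if sgn_if)
      moreover have "\<bar>w $ i\<bar> * \<bar>w $ i\<bar> powr (s - 1) = \<bar>w $ i\<bar> powr s"
        using False by (simp add: powr_diff)
      ultimately show ?thesis by (simp add: v_def) (metis mult.assoc)
    qed
    have "w \<bullet> v = A / A' powr (s - 1)"
      by (simp add: inner_vec_sum wi sum_divide_distrib[symmetric] A_def)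
    also have "\<dots> = A'" using A'p by (simp add: powr_diff As[symmetric])
    also have "A' = pnorm (ereal s) w" by (simp add: pnorm_fin A'_def A_def)
    finally show ?thesis using n1 by (intro exI[of _ v]) simp
  qed
qed

lemma holder_1inf: "\<bar>w \<bullet> v\<bar> \<le> pnorm 1 v * pnorm \<infinity> w" for w v :: "real ^ 'd"
proof -
  have "\<bar>w \<bullet> v\<bar> \<le> (\<Sum>i\<in>UNIV. \<bar>w $ i\<bar> * \<bar>v $ i\<bar>)" by (rule abs_inner_le)
  also have "\<dots> \<le> (\<Sum>i\<in>UNIV. pnorm \<infinity> w * \<bar>v $ i\<bar>)"
    unfolding pnorm_inf by (intro sum_mono mult_right_mono Max_abs_ge) auto
  finally show ?thesis by (simp add: pnorm_one sum_distrib_left mult.commute)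
qed

lemma holder_inf1: "\<bar>w \<bullet> v\<bar> \<le> pnorm \<infinity> v * pnorm 1 w" for w v :: "real ^ 'd"
proof -
  have "\<bar>w \<bullet> v\<bar> \<le> (\<Sum>i\<in>UNIV. \<bar>w $ i\<bar> * \<bar>v $ i\<bar>)" by (rule abs_inner_le)
  also have "\<dots> \<le> (\<Sum>i\<in>UNIV. \<bar>w $ i\<bar> * pnorm \<infinity> v)"
    unfolding pnorm_inf by (intro sum_mono mult_left_mono Max_abs_ge) auto
  also have "\<dots> = pnorm \<infinity> v * pnorm 1 w" by (simp add: pnorm_one sum_distrib_left mult.commute)
  finally show ?thesis .
qed

lemma attain_1inf: "\<exists>v. pnorm 1 v \<le> 1 \<and> pnorm \<infinity> w \<le> w \<bullet> v" for w :: "real ^ 'd"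
proof -
  have "Max (range (\<lambda>i. \<bar>w $ i\<bar>)) \<in> range (\<lambda>i. \<bar>w $ i\<bar>)" by (rule Max_in) auto
  then obtain k where "Max (range (\<lambda>i. \<bar>w $ i\<bar>)) = \<bar>w $ k\<bar>" by blast
  then have k: "pnorm \<infinity> w = \<bar>w $ k\<bar>" by (simp add: pnorm_inf)
  define v :: "real ^ 'd" where "v = (\<chi> i. if i = k then sgn (w $ k) else 0)"
  have "pnorm 1 v = \<bar>sgn (w $ k)\<bar>"
    by (simp add: pnorm_one v_def if_distrib cong: if_cong)
  moreover have "w \<bullet> v = \<bar>w $ k\<bar>"
    by (simp add: inner_vec_sum v_def if_distrib cong: if_cong) (simp add: abs_if sgn_if)
  ultimately show ?thesis using k by (intro exI[of _ v]) (simp add: abs_sgn_eq)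
qed

lemma attain_inf1: "\<exists>v. pnorm \<infinity> v \<le> 1 \<and> pnorm 1 w \<le> w \<bullet> v" for w :: "real ^ 'd"
proof -
  define v :: "real ^ 'd" where "v = (\<chi> i. sgn (w $ i))"
  have "pnorm \<infinity> v \<le> 1" unfolding pnorm_inf
    by (subst Max_le_iff) (auto simp: v_def abs_sgn_eq)
  moreover have "w \<bullet> v = pnorm 1 w"
    by (simp add: inner_vec_sum v_def pnorm_one) (intro sum.cong refl, simp add: abs_if sgn_if)
  ultimately show ?thesis by (intro exI[of _ v]) simp
qed

lemma pnorm_scale_fin: "0 < r \<Longrightarrow> pnorm (ereal r) (c *\<^sub>R v) = \<bar>c\<bar> * pnorm (ereal r) v"
proof -
  assume r: "0 < r"
  have "(\<Sum>i\<in>UNIV. \<bar>(c *\<^sub>R v) $ i\<bar> powr r) = \<bar>c\<bar> powr r * (\<Sum>i\<in>UNIV. \<bar>v $ i\<bar> powr r)"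
    by (simp add: abs_mult powr_mult sum_distrib_left)
  then show ?thesis using r
    by (simp add: pnorm_fin powr_mult sum_nonneg powr_powr)
qed

lemma pnorm_scale_inf: "pnorm \<infinity> (c *\<^sub>R v) = \<bar>c\<bar> * pnorm \<infinity> (v :: real ^ 'd)"
proof -
  have "\<bar>c\<bar> * Max (range (\<lambda>i. \<bar>v $ i\<bar>)) = Max ((\<lambda>x. \<bar>c\<bar> * x) ` range (\<lambda>i. \<bar>v $ i\<bar>))"
    by (rule mono_Max_commute) (auto intro!: monoI mult_left_mono)
  then show ?thesis by (simp add: pnorm_inf abs_mult image_image)
qed

lemma pnorm_nonneg_fin: "0 \<le> pnorm (ereal r) v" by (simp add: pnorm_fin)

lemma pnorm_nonneg_inf: "0 \<le> pnorm \<infinity> (v :: real ^ 'd)"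
  unfolding pnorm_inf by (rule order_trans[OF abs_ge_zero Max_abs_ge])

lemma dual_facts:
  fixes p q :: ereal and w :: "real ^ 'd"
  assumes "1 \<le> p" "1 \<le> q" "1 / p + 1 / q = 1"
  shows "(\<forall>v. \<bar>w \<bullet> v\<bar> \<le> pnorm p v * pnorm q w) \<and> (\<exists>v. pnorm p v \<le> 1 \<and> pnorm q w \<le> w \<bullet> v)
    \<and> (\<forall>c v. pnorm p (c *\<^sub>R v) = \<bar>c\<bar> * pnorm p (v :: real ^ 'd)) \<and> 0 \<le> pnorm q w"
  using ereal_cases_dual[OF assms]
proof (elim disjE exE conjE)
  assume "p = 1" "q = \<infinity>"
  then show ?thesis using holder_1inf attain_1inf pnorm_scale_fin[of 1] pnorm_nonneg_inf
    by (auto simp: one_ereal_def)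
next
  assume "p = \<infinity>" "q = 1"
  then show ?thesis using holder_inf1 attain_inf1 pnorm_scale_inf pnorm_nonneg_fin[of 1]
    by (auto simp: one_ereal_def)
next
  fix r s assume "p = ereal r" "q = ereal s" "1 < r" "1 < s" "1/r + 1/s = 1"
  then show ?thesis using holder_fin[of r s] attain_fin[of r s w] pnorm_scale_fin[of r] pnorm_nonneg_fin
    by auto
qed

lemma adv_char:
  fixes p q :: ereal and w x :: "real ^ 'd"
  assumes "1 \<le> p" "1 \<le> q" "1 / p + 1 / q = 1" "0 < \<epsilon>"
  shows "(\<exists>x'. pnorm p (x - x') \<le> \<epsilon> \<and> lin_class w b x' \<noteq> lin_class w b x) \<longleftrightarrow>
     (if 0 < w \<bullet> x + b then w \<bullet> x + b \<le> \<epsilon> * pnorm q w else - (\<epsilon> * pnorm q w) < w \<bullet> x + b)"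
proof -
  note D = dual_facts[OF assms(1-3), of w]
  define Q where "Q = pnorm q w"
  have H: "\<bar>w \<bullet> u\<bar> \<le> pnorm p u * Q" for u using D Q_def by blast
  obtain v where v: "pnorm p v \<le> 1" "Q \<le> w \<bullet> v" using D Q_def by blast
  have S: "pnorm p (c *\<^sub>R u) = \<bar>c\<bar> * pnorm p u" for c and u :: "real ^ 'd" using D by blast
  have Q0: "0 \<le> Q" using D Q_def by blast
  show ?thesis unfolding Q_def[symmetric]
  proof
    assume "\<exists>x'. pnorm p (x - x') \<le> \<epsilon> \<and> lin_class w b x' \<noteq> lin_class w b x"
    then obtain x' where x': "pnorm p (x - x') \<le> \<epsilon>" "lin_class w b x' \<noteq> lin_class w b x" by blast
    have "\<bar>w \<bullet> (x - x')\<bar> \<le> \<epsilon> * Q" using H[of "x - x'"] x'(1) Q0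
      by (meson mult_right_mono order_trans)
    then have "\<bar>(w \<bullet> x + b) - (w \<bullet> x' + b)\<bar> \<le> \<epsilon> * Q" by (simp add: inner_diff_right)
    then show "if 0 < w \<bullet> x + b then w \<bullet> x + b \<le> \<epsilon> * Q else - (\<epsilon> * Q) < w \<bullet> x + b"
      using x'(2) unfolding lin_class_def by (auto split: if_splits)
  next
    have ve: "pnorm p (c *\<^sub>R v) \<le> \<epsilon>" if "\<bar>c\<bar> = \<epsilon>" for c
      using S[of c v] v(1) that assms(4) by (simp add: mult_left_le)
    have wv: "\<epsilon> * Q \<le> \<epsilon> * (w \<bullet> v)" using v(2) assms(4) by simp
    assume A: "if 0 < w \<bullet> x + b then w \<bullet> x + b \<le> \<epsilon> * Q else - (\<epsilon> * Q) < w \<bullet> x + b"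
    show "\<exists>x'. pnorm p (x - x') \<le> \<epsilon> \<and> lin_class w b x' \<noteq> lin_class w b x"
    proof (cases "0 < w \<bullet> x + b")
      case True
      have "w \<bullet> (x - \<epsilon> *\<^sub>R v) + b = (w \<bullet> x + b) - \<epsilon> * (w \<bullet> v)"
        by (simp add: inner_diff_right)
      then have "\<not> lin_class w b (x - \<epsilon> *\<^sub>R v)" using True A wv unfolding lin_class_def by simp
      then show ?thesis
        apply (intro exI[of _ "x - \<epsilon> *\<^sub>R v"])
        using True ve[of \<epsilon>] assms(4) by (simp add: lin_class_def)
    next
      case False
      have "x - (x + \<epsilon> *\<^sub>R v) = (-\<epsilon>) *\<^sub>R v" by simp
      have "w \<bullet> (x + \<epsilon> *\<^sub>R v) + b = (w \<bullet> x + b) + \<epsilon> * (w \<bullet> v)"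
        by (simp add: inner_add_right)
      then have "lin_class w b (x + \<epsilon> *\<^sub>R v)" using False A wv unfolding lin_class_def by simp
      then show ?thesis
        apply (intro exI[of _ "x + \<epsilon> *\<^sub>R v"])
        using False ve[of "-\<epsilon>"] assms(4) \<open>x - (x + \<epsilon> *\<^sub>R v) = (-\<epsilon>) *\<^sub>R v\<close>
        by (simp add: lin_class_def)
    qed
  qed
qed

lemma Phi_measure: "measure (density lborel std_normal_density) {..c} = Phi c"
proof -
  have int: "integrable lborel (\<lambda>x. indicator {..c} x *\<^sub>R std_normal_density x)"
    using integrable_std_normal_moment[of 0]
    by (intro integrable_mult_indicator) auto
  have "emeasure (density lborel std_normal_density) {..c}
      = (\<integral>\<^sup>+ x. ennreal (indicator {..c} x *\<^sub>R std_normal_density x) \<partial>lborel)"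
    by (subst emeasure_density) (auto intro!: nn_integral_cong split: split_indicator)
  also have "\<dots> = ennreal (integral\<^sup>L lborel (\<lambda>x. indicator {..c} x *\<^sub>R std_normal_density x))"
    by (rule nn_integral_eq_integral[OF int]) auto
  finally show ?thesis unfolding Phi_def set_lebesgue_integral_def measure_def
    by (simp add: integral_nonneg_AE)
qed

lemma normal_cdf:
  assumes s: "0 < s"
  shows "measure (density lborel (normal_density \<mu> s)) {..t} = Phi ((t - \<mu>) / s)"
proof -
  define D where "D = density lborel (normal_density \<mu> s)"
  interpret D: prob_space D unfolding D_def by (rule prob_space_normal_density[OF s])
  have "distributed D lborel (\<lambda>x. x) (normal_density \<mu> s)"
    unfolding distributed_def D_def by (auto simp: distr_id2)
  from D.normal_density_affine[OF this s, of "1/s" "-\<mu>/s"] s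
  have Z: "distributed D lborel (\<lambda>x. -\<mu>/s + 1/s * x) std_normal_density"
    by simp
  have "{..t} = (\<lambda>x. -\<mu>/s + 1/s * x) -` {..(t - \<mu>)/s} \<inter> space D"
    using s by (auto simp: D_def field_simps)
  then have "measure D {..t} = measure D ((\<lambda>x. -\<mu>/s + 1/s * x) -` {..(t - \<mu>)/s} \<inter> space D)"
    by simp
  also have "\<dots> = measure (distr D lborel (\<lambda>x. -\<mu>/s + 1/s * x)) {..(t - \<mu>)/s}"
    by (rule measure_distr[symmetric]) (use Z in \<open>auto simp: distributed_def\<close>)
  also have "\<dots> = Phi ((t - \<mu>) / s)"
    using Z by (simp add: distributed_def Phi_measure)
  finally show ?thesis unfolding D_def .
qed

lemma Basis_vec_real: "(Basis :: (real ^ 'd) set) = (\<lambda>i. axis i 1) ` UNIV"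
  by (auto simp: Basis_vec_def)

lemma prod_vec_Basis:
  fixes x m :: "real ^ 'd"
  shows "(\<Prod>i\<in>UNIV. normal_density (m $ i) s (x $ i)) = (\<Prod>b\<in>Basis. normal_density (m \<bullet> b) s (x \<bullet> b))"
proof -
  have inj: "inj (\<lambda>i::'d. axis i (1::real))" by (auto intro: injI simp: axis_eq_axis)
  show ?thesis unfolding Basis_vec_real
    by (subst prod.reindex[OF inj]) (simp add: cart_eq_inner_axis)
qed

lemma PiM_normal_density:
  fixes m :: "'a::euclidean_space \<Rightarrow> real"
  assumes s: "0 < s"
  shows "density (\<Pi>\<^sub>M b\<in>(Basis :: 'a::euclidean_space set). lborel) (\<lambda>f. \<Prod>b\<in>Basis. ennreal (normal_density (m b) s (f b)))
       = (\<Pi>\<^sub>M b\<in>Basis. density lborel (normal_density (m b) s))"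
proof -
  define N where "N = (\<lambda>b::'a. density lborel (normal_density (m b) s))"
  interpret N: product_sigma_finite N
    unfolding product_sigma_finite_def N_def
    using prob_space_normal_density[OF s] prob_space_imp_sigma_finite by blast
  interpret L: product_sigma_finite "\<lambda>_::'a. lborel :: real measure"
    by (simp add: product_sigma_finite_def lborel.sigma_finite_measure_axioms)
  have sN: "sets (N b) = sets borel" for b unfolding N_def by simp
  show ?thesis unfolding N_def[symmetric]
  proof (rule N.PiM_eqI)
    show "finite (Basis :: 'a set)" by simp
    show "sets (density (\<Pi>\<^sub>M b\<in>(Basis::'a set). lborel) (\<lambda>f. \<Prod>b\<in>Basis. ennreal (normal_density (m b) s (f b))))
      = sets (\<Pi>\<^sub>M b\<in>Basis. N b)"
      by (simp add: sN cong: sets_PiM_cong)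
  next
    fix A assume A: "\<And>b. b \<in> Basis \<Longrightarrow> A b \<in> sets (N b)"
    then have A': "\<And>b. b \<in> Basis \<Longrightarrow> A b \<in> sets borel" by (simp add: sN)
    have "emeasure (density (\<Pi>\<^sub>M b\<in>(Basis::'a set). lborel) (\<lambda>f. \<Prod>b\<in>Basis. ennreal (normal_density (m b) s (f b)))) (Pi\<^sub>E Basis A)
      = (\<integral>\<^sup>+ f. (\<Prod>b\<in>Basis. ennreal (normal_density (m b) s (f b))) * indicator (Pi\<^sub>E Basis A) f \<partial>(\<Pi>\<^sub>M b\<in>(Basis::'a set). lborel))"
      using A' by (subst emeasure_density) (auto intro!: sets_PiM_I_finite)
    also have "\<dots> = (\<integral>\<^sup>+ f. (\<Prod>b\<in>Basis. ennreal (normal_density (m b) s (f b)) * indicator (A b) (f b)) \<partial>(\<Pi>\<^sub>M b\<in>(Basis::'a set). lborel))"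
    proof (intro nn_integral_cong)
      fix f assume "f \<in> space (\<Pi>\<^sub>M b\<in>(Basis::'a set). (lborel :: real measure))"
      then have fE: "f \<in> extensional Basis" by (simp add: space_PiM PiE_def)
      have "indicator (Pi\<^sub>E Basis A) f = (\<Prod>b\<in>Basis. indicator (A b) (f b) :: ennreal)"
        using fE by (auto simp: indicator_def PiE_def Pi_def prod.neutral)
      then show "(\<Prod>b\<in>Basis. ennreal (normal_density (m b) s (f b))) * indicator (Pi\<^sub>E Basis A) f
        = (\<Prod>b\<in>Basis. ennreal (normal_density (m b) s (f b)) * indicator (A b) (f b))"
        by (simp add: prod.distrib)
    qed
    also have "\<dots> = (\<Prod>b\<in>Basis. \<integral>\<^sup>+ x. ennreal (normal_density (m b) s x) * indicator (A b) x \<partial>lborel)"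
      using A' by (intro L.product_nn_integral_prod) auto
    also have "\<dots> = (\<Prod>b\<in>Basis. emeasure (N b) (A b))"
      using A' by (intro prod.cong refl) (simp add: N_def emeasure_density)
    finally show "emeasure (density (\<Pi>\<^sub>M b\<in>(Basis::'a set). lborel) (\<lambda>f. \<Prod>b\<in>Basis. ennreal (normal_density (m b) s (f b)))) (Pi\<^sub>E Basis A)
      = (\<Prod>b\<in>Basis. emeasure (N b) (A b))" .
  qed
qed

lemma inner_Basis_sum:
  fixes f :: "'a::euclidean_space \<Rightarrow> real"
  assumes "b \<in> Basis"
  shows "(\<Sum>c\<in>Basis. f c *\<^sub>R c) \<bullet> b = f b"
  using assms by (simp add: inner_sum_left inner_Basis if_distrib cong: if_cong)

lemma gauss_eq_distr:
  fixes m :: "real ^ 'd"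
  assumes s: "0 < s"
  shows "gauss_iso m s = distr (\<Pi>\<^sub>M b\<in>Basis. density lborel (normal_density (m \<bullet> b) s)) borel
            (\<lambda>f. \<Sum>b\<in>Basis. f b *\<^sub>R b)"
proof -
  let ?PL = "\<Pi>\<^sub>M b\<in>(Basis :: (real^'d) set). (lborel :: real measure)"
  let ?g = "\<lambda>x::real^'d. ennreal (\<Prod>b\<in>Basis. normal_density (m \<bullet> b) s (x \<bullet> b))"
  let ?\<Phi> = "\<lambda>f. \<Sum>b\<in>(Basis :: (real^'d) set). f b *\<^sub>R b"
  have "gauss_iso m s = density lborel ?g"
    by (simp add: gauss_iso_def prod_vec_Basis)
  also have "\<dots> = density (distr ?PL borel ?\<Phi>) ?g"
    by (subst lborel_eq[where 'a="real^'d"]) (rule refl)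
  also have "\<dots> = distr (density ?PL (\<lambda>f. ?g (?\<Phi> f))) borel ?\<Phi>"
    by (rule density_distr) measurable
  also have "density ?PL (\<lambda>f. ?g (?\<Phi> f)) = density ?PL (\<lambda>f. \<Prod>b\<in>Basis. ennreal (normal_density (m \<bullet> b) s (f b)))"
    by (intro density_cong) (auto simp: inner_Basis_sum prod_ennreal cong: prod.cong)
  also have "\<dots> = (\<Pi>\<^sub>M b\<in>Basis. density lborel (normal_density (m \<bullet> b) s))"
    by (rule PiM_normal_density[OF s])
  finally show ?thesis .
qed

lemma lin_cdf:
  fixes m w :: "real ^ 'd"
  assumes s: "0 < s" and w: "w \<noteq> 0"
  shows "measure (gauss_iso m s) {x. w \<bullet> x \<le> t} = Phi ((t - w \<bullet> m) / (s * norm w))"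
    and "prob_space (gauss_iso m s)"
proof -
  define N where "N = (\<lambda>b::real^'d. density lborel (normal_density (m \<bullet> b) s))"
  define P where "P = (\<Pi>\<^sub>M b\<in>Basis. N b)"
  define \<Phi> where "\<Phi> = (\<lambda>f. \<Sum>b\<in>(Basis :: (real^'d) set). f b *\<^sub>R b)"
  define I where "I = {b\<in>(Basis :: (real^'d) set). w \<bullet> b \<noteq> 0}"
  have NP: "prob_space (N b)" for b unfolding N_def by (rule prob_space_normal_density[OF s])
  have sN: "sets (N b) = sets borel" for b unfolding N_def by simp
  interpret P: prob_space P unfolding P_def by (rule prob_space_PiM) (rule NP)
  have G: "gauss_iso m s = distr P borel \<Phi>"
    unfolding P_def N_def \<Phi>_def by (rule gauss_eq_distr[OF s])
  have sP: "sets P = sets (\<Pi>\<^sub>M b\<in>(Basis :: (real^'d) set). (lborel :: real measure))"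
    unfolding P_def by (intro sets_PiM_cong) (simp_all add: sN)
  have \<Phi>m: "\<Phi> \<in> measurable P borel"
    unfolding measurable_cong_sets[OF sP refl] \<Phi>_def by measurable
  show "prob_space (gauss_iso m s)" unfolding G by (rule P.prob_space_distr[OF \<Phi>m])
  have I_ne: "I \<noteq> {}"
  proof
    assume "I = {}"
    then have "\<forall>b\<in>Basis. w \<bullet> b = 0" unfolding I_def by auto
    then have "w = 0" by (simp add: euclidean_all_zero_iff)
    with w show False by simp
  qed
  have I_fin: "finite I" unfolding I_def by simp
  have rv: "(\<lambda>f. f b) \<in> measurable P (N b)" for b
  proof (cases "b \<in> Basis")
    case True then show ?thesis unfolding P_def by simp
  next
    case False
    have "(\<lambda>_. undefined) \<in> measurable P (N b)" by (simp add: N_def)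
    moreover have "f \<in> space P \<Longrightarrow> f b = undefined" for f
      using False by (auto simp: P_def space_PiM PiE_def extensional_def)
    ultimately show ?thesis by (subst measurable_cong) auto
  qed
  have ind0: "P.indep_vars N (\<lambda>b f. f b) Basis"
  proof (subst P.indep_vars_iff_distr_eq_PiM)
    show "(Basis :: (real^'d) set) \<noteq> {}" by simp
    show "(\<lambda>f. f b) \<in> measurable P (N b)" for b by (rule rv)
    have "distr P (\<Pi>\<^sub>M b\<in>Basis. N b) (\<lambda>x. \<lambda>b\<in>Basis. x b) = distr P P (\<lambda>x. x)"
      by (intro distr_cong) (auto simp: P_def space_PiM PiE_def restrict_def extensional_def fun_eq_iff)
    also have "\<dots> = P" by simp
    also have "\<dots> = (\<Pi>\<^sub>M b\<in>Basis. distr P (N b) (\<lambda>x. x b))"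
      unfolding P_def by (intro PiM_cong refl distr_PiM_component[symmetric] NP) auto
    finally show "distr P (\<Pi>\<^sub>M b\<in>Basis. N b) (\<lambda>x. \<lambda>b\<in>Basis. x b) = (\<Pi>\<^sub>M b\<in>Basis. distr P (N b) (\<lambda>x. x b))" .
  qed
  have ind: "P.indep_vars (\<lambda>_. borel) (\<lambda>b f. (w \<bullet> b) * f b) I"
  proof -
    have "P.indep_vars (\<lambda>_. borel) (\<lambda>b f. (w \<bullet> b) * f b) Basis"
      by (rule P.indep_vars_compose2[OF ind0]) (simp add: measurable_cong_sets[OF sN refl])
    then show ?thesis by (rule P.indep_vars_subset) (auto simp: I_def)
  qed
  have dist1: "distributed P lborel (\<lambda>f. f b) (normal_density (m \<bullet> b) s)" if "b \<in> Basis" for b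
  proof -
    have "distr P lborel (\<lambda>f. f b) = distr P (N b) (\<lambda>f. f b)"
      by (intro distr_cong) (auto simp: sN)
    also have "\<dots> = N b" unfolding P_def by (rule distr_PiM_component[OF NP that])
    finally show ?thesis unfolding distributed_def
      using rv[of b] by (simp add: N_def measurable_cong_sets[OF sN refl])
  qed
  have dist2: "distributed P lborel (\<lambda>f. (w \<bullet> b) * f b) (normal_density ((w \<bullet> b) * (m \<bullet> b)) (\<bar>w \<bullet> b\<bar> * s))"
    if "b \<in> I" for b
    using P.normal_density_affine[OF dist1 s, of b "w \<bullet> b" 0] that by (simp add: I_def)
  have S: "distributed P lborel (\<lambda>f. \<Sum>b\<in>I. (w \<bullet> b) * f b)
      (normal_density (\<Sum>b\<in>I. (w \<bullet> b) * (m \<bullet> b)) (sqrt (\<Sum>b\<in>I. (\<bar>w \<bullet> b\<bar> * s)\<^sup>2)))"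
    by (rule P.sum_indep_normal[OF I_fin I_ne ind _ dist2]) (use s in \<open>auto simp: I_def\<close>)
  have sumI: "(\<Sum>b\<in>I. g b) = (\<Sum>b\<in>Basis. g b)" if "\<And>b. w \<bullet> b = 0 \<Longrightarrow> g b = 0" for g :: "real^'d \<Rightarrow> real"
    unfolding I_def by (subst sum.inter_filter) (auto intro!: sum.cong simp: that)
  have mu: "(\<Sum>b\<in>I. (w \<bullet> b) * (m \<bullet> b)) = w \<bullet> m"
    by (subst sumI) (auto simp: euclidean_inner[of w m])
  have "(\<Sum>b\<in>I. (\<bar>w \<bullet> b\<bar> * s)\<^sup>2) = s\<^sup>2 * (\<Sum>b\<in>Basis. (w \<bullet> b) * (w \<bullet> b))"
    by (subst sumI) (auto simp: sum_distrib_left power_mult_distrib power2_eq_square intro!: sum.cong)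
  also have "\<dots> = (s * norm w)\<^sup>2"
    by (simp add: euclidean_inner[of w w, symmetric] power_mult_distrib power2_norm_eq_inner)
  finally have sig: "sqrt (\<Sum>b\<in>I. (\<bar>w \<bullet> b\<bar> * s)\<^sup>2) = s * norm w" using s by simp
  have Sd: "distr P lborel (\<lambda>f. \<Sum>b\<in>I. (w \<bullet> b) * f b) = density lborel (normal_density (w \<bullet> m) (s * norm w))"
    using S unfolding distributed_def mu sig by simp
  have Sm: "(\<lambda>f. \<Sum>b\<in>I. (w \<bullet> b) * f b) \<in> measurable P lborel" using S unfolding distributed_def by simp
  have pre: "\<Phi> -` {x. w \<bullet> x \<le> t} \<inter> space P = (\<lambda>f. \<Sum>b\<in>I. (w \<bullet> b) * f b) -` {..t} \<inter> space P"
  proof -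
    have "w \<bullet> \<Phi> f = (\<Sum>b\<in>I. (w \<bullet> b) * f b)" for f
      unfolding \<Phi>_def by (subst sumI) (auto simp: inner_sum_right mult.commute)
    then show ?thesis by auto
  qed
  have hs: "{x. w \<bullet> x \<le> t} \<in> sets borel" by (intro borel_closed closed_halfspace_le)
  have "measure (gauss_iso m s) {x. w \<bullet> x \<le> t} = measure P (\<Phi> -` {x. w \<bullet> x \<le> t} \<inter> space P)"
    unfolding G by (rule measure_distr[OF \<Phi>m hs])
  also have "\<dots> = measure (distr P lborel (\<lambda>f. \<Sum>b\<in>I. (w \<bullet> b) * f b)) {..t}"
    unfolding pre by (rule measure_distr[symmetric, OF Sm]) simp
  also have "\<dots> = Phi ((t - w \<bullet> m) / (s * norm w))"
    unfolding Sd by (rule normal_cdf) (use s w in simp)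
  finally show "measure (gauss_iso m s) {x. w \<bullet> x \<le> t} = Phi ((t - w \<bullet> m) / (s * norm w))" .
qed

lemma Phi_sym: "Phi (- x) = 1 - Phi x"
proof -
  define D where "D = density lborel std_normal_density"
  interpret D: prob_space D unfolding D_def by (rule prob_space_normal_density) simp
  have sD: "sets D = sets borel" by (simp add: D_def)
  have "distributed D lborel (\<lambda>x. x) std_normal_density"
    unfolding distributed_def D_def by (auto simp: distr_id2)
  from D.normal_density_affine[OF this, of "-1" 0]
  have U: "distributed D lborel (\<lambda>x. 0 + -1 * x) std_normal_density" by simp
  have "Phi (-x) = measure (distr D lborel (\<lambda>x. 0 + -1 * x)) {..-x}"
    using U by (simp add: distributed_def Phi_measure D_def)
  also have "\<dots> = measure D ((\<lambda>x. 0 + -1 * x) -` {..-x} \<inter> space D)"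
    by (rule measure_distr) (use U in \<open>auto simp: distributed_def\<close>)
  also have "(\<lambda>x. 0 + -1 * x) -` {..-x} \<inter> space D = space D - {..<x}"
    by (auto simp: D_def)
  also have "measure D (space D - {..<x}) = 1 - measure D {..<x}"
    by (rule D.prob_compl) (simp add: sD)
  also have "measure D {..<x} = measure D {..x}"
  proof -
    have "emeasure D {x} = (\<integral>\<^sup>+ y. ennreal (std_normal_density y) * indicator {x} y \<partial>lborel)"
      unfolding D_def by (rule emeasure_density) auto
    also have "\<dots> = 0"
      by (rule nn_integral_null_set) (auto simp: null_sets_def)
    finally have "measure D {x} = 0" by (simp add: measure_def)
    moreover have "{..x} = {..<x} \<union> {x}" by auto
    ultimately show ?thesis
      using D.finite_measure_Union[of "{..<x}" "{x}"] by (simp add: sD)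
  qed
  also have "measure D {..x} = Phi x" unfolding D_def by (rule Phi_measure)
  finally show ?thesis .
qed

theorem theorem3:
  fixes M :: "'s measure" and X :: "'s \<Rightarrow> real ^ 'd" and Y :: "'s \<Rightarrow> bool"
    and p q :: ereal and mu_plus mu_minus w :: "real ^ 'd" and \<sigma> b \<epsilon> :: real
  assumes "prob_space M"
    and "1 \<le> p" and "1 \<le> q" and "1 / p + 1 / q = 1"
    and "\<sigma> > 0"
    and "X \<in> borel_measurable M" and "Y \<in> measurable M (count_space UNIV)"
    and "measure M {\<omega>\<in>space M. Y \<omega>} = 1/2" and "measure M {\<omega>\<in>space M. \<not> Y \<omega>} = 1/2"
    and "\<And>A. A \<in> sets borel \<Longrightarrow>
           measure M {\<omega>\<in>space M. Y \<omega> \<and> X \<omega> \<in> A} = 1/2 * measure (gauss_iso mu_plus \<sigma>) A"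
    and "\<And>A. A \<in> sets borel \<Longrightarrow>
           measure M {\<omega>\<in>space M. \<not> Y \<omega> \<and> X \<omega> \<in> A} = 1/2 * measure (gauss_iso mu_minus \<sigma>) A"
    and "w \<noteq> 0"
    and "\<epsilon> > 0"
  defines "mu \<equiv> (1/2) *\<^sub>R (mu_plus - mu_minus)"
    and "b' \<equiv> w \<bullet> ((1/2) *\<^sub>R (mu_plus + mu_minus)) + b"
    and "p_m \<equiv> measure M {\<omega>\<in>space M. lin_class w b (X \<omega>) \<noteq> Y \<omega>}"
    and "p_adv \<equiv> measure M {\<omega>\<in>space M. lin_class w b (X \<omega>) = Y \<omega> \<and>
             (\<exists>x'. pnorm p (X \<omega> - x') \<le> \<epsilon> \<and> lin_class w b x' \<noteq> lin_class w b (X \<omega>))}"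
  shows "p_adv = 1 - p_m - (1/2) *
           (Phi ((w \<bullet> mu + b') / (norm w * \<sigma>) - pnorm q w / norm w * (\<epsilon> / \<sigma>))
          + Phi ((w \<bullet> mu - b') / (norm w * \<sigma>) - pnorm q w / norm w * (\<epsilon> / \<sigma>)))"
proof -
  interpret M: prob_space M by fact
  note XM[measurable] = assms(6)
  note YM[measurable] = assms(7)
  have D: "(\<forall>v. \<bar>w \<bullet> v\<bar> \<le> pnorm p v * pnorm q w) \<and> (\<exists>v. pnorm p v \<le> 1 \<and> pnorm q w \<le> w \<bullet> v)
    \<and> (\<forall>c v. pnorm p (c *\<^sub>R v) = \<bar>c\<bar> * pnorm p (v :: real ^ 'd)) \<and> 0 \<le> pnorm q w"
    by (rule dual_facts[OF assms(2-4)])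
  define Q where "Q = pnorm q w"
  have Q0: "0 \<le> Q" using D Q_def by blast
  define H where "H = (\<lambda>c. {x. w \<bullet> x \<le> c})"
  have Hb[measurable]: "H c \<in> sets borel" for c unfolding H_def by (intro borel_closed closed_halfspace_le)
  define Gp where "Gp = gauss_iso mu_plus \<sigma>"
  define Gm where "Gm = gauss_iso mu_minus \<sigma>"
  interpret Gp: prob_space Gp unfolding Gp_def by (rule lin_cdf(2)[OF assms(5) assms(12)])
  interpret Gm: prob_space Gm unfolding Gm_def by (rule lin_cdf(2)[OF assms(5) assms(12)])
  have sGp: "sets Gp = sets borel" "space Gp = UNIV" by (simp_all add: Gp_def gauss_iso_def)
  have sGm: "sets Gm = sets borel" "space Gm = UNIV" by (simp_all add: Gm_def gauss_iso_def)
  define k where "k = \<sigma> * norm w"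
  have k: "0 < k" using assms(5,12) by (simp add: k_def)
  have Fp: "measure Gp (H c) = Phi ((c - w \<bullet> mu_plus) / k)" for c
    unfolding Gp_def H_def k_def by (rule lin_cdf(1)[OF assms(5) assms(12)])
  have Fm: "measure Gm (H c) = Phi ((c - w \<bullet> mu_minus) / k)" for c
    unfolding Gm_def H_def k_def by (rule lin_cdf(1)[OF assms(5) assms(12)])
  define Ap where "Ap = H (\<epsilon> * Q - b) - H (- b)"
  define Am where "Am = H (- b) - H (- (\<epsilon> * Q) - b)"
  have eQ: "0 \<le> \<epsilon> * Q" using Q0 assms(13) by simp
  have Hsub1: "H (- b) \<subseteq> H (\<epsilon> * Q - b)" unfolding H_def using eQ by auto
  have Hsub2: "H (- (\<epsilon> * Q) - b) \<subseteq> H (- b)" unfolding H_def using eQ by auto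
  have Apb[measurable]: "Ap \<in> sets borel" and Amb[measurable]: "Am \<in> sets borel"
    unfolding Ap_def Am_def by auto
  have GpA: "measure Gp Ap = measure Gp (H (\<epsilon> * Q - b)) - measure Gp (H (- b))"
    unfolding Ap_def by (rule Gp.finite_measure_Diff) (auto simp: sGp Hsub1)
  have GmA: "measure Gm Am = measure Gm (H (- b)) - measure Gm (H (- (\<epsilon> * Q) - b))"
    unfolding Am_def by (rule Gm.finite_measure_Diff) (auto simp: sGm Hsub2)
  have Gpc: "measure Gp (UNIV - H (- b)) = 1 - measure Gp (H (- b))"
    using Gp.prob_compl[of "H (- b)"] by (simp add: sGp)
  have MY: "measure M {\<omega>\<in>space M. Y \<omega> \<and> X \<omega> \<in> A} = 1/2 * measure Gp A" if "A \<in> sets borel" for A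
    using assms(10)[OF that] by (simp add: Gp_def)
  have MN: "measure M {\<omega>\<in>space M. \<not> Y \<omega> \<and> X \<omega> \<in> A} = 1/2 * measure Gm A" if "A \<in> sets borel" for A
    using assms(11)[OF that] by (simp add: Gm_def)
  have adv: "(\<exists>x'. pnorm p (x - x') \<le> \<epsilon> \<and> lin_class w b x' \<noteq> lin_class w b x) \<longleftrightarrow>
     (if 0 < w \<bullet> x + b then w \<bullet> x + b \<le> \<epsilon> * Q else - (\<epsilon> * Q) < w \<bullet> x + b)" for x
    unfolding Q_def by (rule adv_char[OF assms(2-4) assms(13)])
  have set_adv: "{\<omega>\<in>space M. lin_class w b (X \<omega>) = Y \<omega> \<and>
             (\<exists>x'. pnorm p (X \<omega> - x') \<le> \<epsilon> \<and> lin_class w b x' \<noteq> lin_class w b (X \<omega>))}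
     = {\<omega>\<in>space M. Y \<omega> \<and> X \<omega> \<in> Ap} \<union> {\<omega>\<in>space M. \<not> Y \<omega> \<and> X \<omega> \<in> Am}"
    unfolding adv by (auto simp: Ap_def Am_def H_def lin_class_def)
  have set_m: "{\<omega>\<in>space M. lin_class w b (X \<omega>) \<noteq> Y \<omega>}
     = {\<omega>\<in>space M. Y \<omega> \<and> X \<omega> \<in> H (- b)} \<union> {\<omega>\<in>space M. \<not> Y \<omega> \<and> X \<omega> \<in> UNIV - H (- b)}"
    by (auto simp: H_def lin_class_def)
  have padv: "p_adv = 1/2 * measure Gp Ap + 1/2 * measure Gm Am"
    unfolding p_adv_def set_adv
    by (subst M.finite_measure_Union) (auto simp: MY MN)
  have pm: "p_m = 1/2 * measure Gp (H (- b)) + 1/2 * measure Gm (UNIV - H (- b))"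
    unfolding p_m_def set_m
  proof (subst M.finite_measure_Union)
    have "UNIV - H (- b) \<in> sets borel" by simp
    note MN[OF this]
    then show "M.prob {\<omega> \<in> space M. Y \<omega> \<and> X \<omega> \<in> H (- b)} + M.prob {\<omega> \<in> space M. \<not> Y \<omega> \<and> X \<omega> \<in> UNIV - H (- b)} =
      1/2 * measure Gp (H (- b)) + 1/2 * measure Gm (UNIV - H (- b))"
      by (simp only: MY[OF Hb])
  qed auto
  have Gmc: "measure Gm (UNIV - H (- b)) = 1 - measure Gm (H (- b))"
    using Gm.prob_compl[of "H (- b)"] by (simp add: sGm)
  define A1 where "A1 = (w \<bullet> mu + b') / (norm w * \<sigma>)"
  define A2 where "A2 = (w \<bullet> mu - b') / (norm w * \<sigma>)"
  define C where "C = pnorm q w / norm w * (\<epsilon> / \<sigma>)"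
  have e1: "w \<bullet> mu + b' = w \<bullet> mu_plus + b" and e2: "w \<bullet> mu - b' = - (w \<bullet> mu_minus) - b"
    unfolding mu_def b'_def by (simp_all add: inner_diff_right inner_add_right algebra_simps)
  have nw: "norm w \<noteq> 0" using assms(12) by simp
  have a1: "(- b - w \<bullet> mu_plus) / k = - A1"
    unfolding A1_def e1 k_def using nw assms(5) by (simp add: field_simps)
  have a2: "(\<epsilon> * Q - b - w \<bullet> mu_plus) / k = - (A1 - C)"
    unfolding A1_def C_def e1 k_def Q_def using nw assms(5) by (simp add: field_simps)
  have a3: "(- b - w \<bullet> mu_minus) / k = A2"
    unfolding A2_def e2 k_def using nw assms(5) by (simp add: field_simps)
  have a4: "(- (\<epsilon> * Q) - b - w \<bullet> mu_minus) / k = A2 - C"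
    unfolding A2_def C_def e2 k_def Q_def using nw assms(5) by (simp add: field_simps)
  have "p_adv = 1/2 * ((1 - Phi (A1 - C)) - (1 - Phi A1)) + 1/2 * (Phi A2 - Phi (A2 - C))"
    unfolding padv GpA GmA Fp Fm a1 a2 a3 a4 Phi_sym ..
  moreover have "p_m = 1/2 * (1 - Phi A1) + 1/2 * (1 - Phi A2)"
    unfolding pm Gmc Fp Fm a1 a3 Phi_sym ..
  ultimately have "p_adv = 1 - p_m - 1/2 * (Phi (A1 - C) + Phi (A2 - C))" by (simp add: field_simps)
  then show ?thesis unfolding A1_def A2_def C_def .
qed

end
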